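(* Let $(X,\Sigma)$ be a locally finite test space and let $\mathrm{Pl}$ be an Archimedean plausibility measure on it. Let $V$ be the $\mathbb{Q}$-vector space with basis $\{e_x:x\in X\}$. For an event $A$ write $e_A=\sum_{x\in A}e_x$, so that $e_\emptyset=0$. Let $C\subseteq V$ be the set of all finite linear combinations with non-negative rational coefficients of vectors $e_A-e_B$, where $A,B$ are events with $\mathrm{Pl}(A)\succeq\mathrm{Pl}(B)$. Then the following hold: (1) For any events $A,B$ with $\mathrm{Pl}(A)\prec\mathrm{Pl}(B)$, we have $e_A-e_B\notin C$. (2) For any test $T\in\Sigma$, $(V,C,e_T)$ is an order unit space over $\mathbb{Q}$.
   Context: A test space $(X,\Sigma)$ is a set $X$ of outcomes together with a set $\Sigma\subseteq 2^X$ of subsets (called tests) with $\bigcup_{T\in\Sigma}T=X$. It is locally finite if every test is finite. An event is a subset of $X$ contained in some test, and $E(X,\Sigma)$ denotes the set of events. A plausibility measure is a function $\mathrm{Pl}:E(X,\Sigma)\to D$, where $(D,\preceq)$ is a poset, satisfying three conditions: (i) $\mathrm{Pl}(T)=\mathrm{Pl}(R)$ for all tests $T,R$; (ii) $A\subseteq B$ implies $\mathrm{Pl}(A)\preceq\mathrm{Pl}(B)$; (iii) $\mathrm{Pl}(\emptyset)\prec\mathrm{Pl}(T)$ for tests $T$. Here $a\prec b$ means $a\preceq b$ and $b\not\preceq a$. $\mathrm{Pl}$ is Archimedean if the following holds for every $n\ge1$ and every pair of families of events $(A_1,\dots,A_n)$, $(B_1,\dots,B_n)$ such that each outcome lies in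 the same number of $A_i$'s as of $B_i$'s: whenever $\mathrm{Pl}(A_i)\preceq\mathrm{Pl}(B_i)$ for $i<n$, then $\mathrm{Pl}(A_n)\succeq\mathrm{Pl}(B_n)$. For a subfield $\mathbb{F}\subseteq\mathbb{R}$ and an $\mathbb{F}$-vector space $V$, a convex cone is a subset $C\subseteq V$ closed under addition and under multiplication by non-negative scalars. Write $a\ge b$ for $a-b\in C$. An order unit space is a triple $(V,C,u)$ with $C$ a convex cone and $u\in C$ such that both of the following hold: - $-u\notin C$; - for every $a\in V$ there is $\lambda\in\mathbb{F}$ with $\lambda u+a\in C$. *)

theory Defs
  imports Complex_Main
begin

definition test_space :: "'a set \<Rightarrow> 'a set set \<Rightarrow> bool" where
  "test_space X \<Sigma> \<longleftrightarrow> \<Sigma> \<subseteq> Pow X \<and> \<Union>\<Sigma> = X"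

definition locally_finite :: "'a set set \<Rightarrow> bool" where
  "locally_finite \<Sigma> \<longleftrightarrow> (\<forall>T\<in>\<Sigma>. finite T)"

definition events :: "'a set set \<Rightarrow> 'a set set" where
  "events \<Sigma> = {A. \<exists>T\<in>\<Sigma>. A \<subseteq> T}"

definition plausibility_measure :: "'a set set \<Rightarrow> ('a set \<Rightarrow> 'd::order) \<Rightarrow> bool" where
  "plausibility_measure \<Sigma> Pl \<longleftrightarrow>
     (\<forall>T\<in>\<Sigma>. \<forall>R\<in>\<Sigma>. Pl T = Pl R) \<and>
     (\<forall>A\<in>events \<Sigma>. \<forall>B\<in>events \<Sigma>. A \<subseteq> B \<longrightarrow> Pl A \<le> Pl B) \<and>
     (\<forall>T\<in>\<Sigma>. Pl {} < Pl T)"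

(* Archimedean: families indexed by 0..n-1; the last index n-1 plays the role of n *)
definition archimedean :: "'a set \<Rightarrow> 'a set set \<Rightarrow> ('a set \<Rightarrow> 'd::order) \<Rightarrow> bool" where
  "archimedean X \<Sigma> Pl \<longleftrightarrow>
     (\<forall>n::nat. \<forall>A B :: nat \<Rightarrow> 'a set.
        n \<ge> 1 \<longrightarrow>
        (\<forall>i<n. A i \<in> events \<Sigma> \<and> B i \<in> events \<Sigma>) \<longrightarrow>
        (\<forall>x\<in>X. card {i. i < n \<and> x \<in> A i} = card {i. i < n \<and> x \<in> B i}) \<longrightarrow>
        (\<forall>i<n - 1. Pl (A i) \<le> Pl (B i)) \<longrightarrow>
        Pl (B (n - 1)) \<le> Pl (A (n - 1)))"

(* The Q-vector space with basis {e_x : x \<in> X}: finitely supported functions X \<rightarrow> Q *)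
definition free_space :: "'a set \<Rightarrow> ('a \<Rightarrow> rat) set" where
  "free_space X = {v. finite {x. v x \<noteq> 0} \<and> {x. v x \<noteq> 0} \<subseteq> X}"

definition evec :: "'a set \<Rightarrow> ('a \<Rightarrow> rat)" where
  "evec A = (\<lambda>x. if x \<in> A then 1 else 0)"

definition plaus_cone :: "'a set set \<Rightarrow> ('a set \<Rightarrow> 'd::order) \<Rightarrow> ('a \<Rightarrow> rat) set" where
  "plaus_cone \<Sigma> Pl = {v. \<exists>(n::nat) (c::nat \<Rightarrow> rat) (A::nat \<Rightarrow> 'a set) (B::nat \<Rightarrow> 'a set).
      (\<forall>i<n. c i \<ge> 0 \<and> A i \<in> events \<Sigma> \<and> B i \<in> events \<Sigma> \<and> Pl (B i) \<le> Pl (A i)) \<and>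
      v = (\<lambda>x. \<Sum>i<n. c i * (evec (A i) x - evec (B i) x))}"

definition convex_cone :: "('a \<Rightarrow> rat) set \<Rightarrow> ('a \<Rightarrow> rat) set \<Rightarrow> bool" where
  "convex_cone V C \<longleftrightarrow> C \<subseteq> V \<and>
     (\<forall>a\<in>C. \<forall>b\<in>C. (\<lambda>x. a x + b x) \<in> C) \<and>
     (\<forall>r::rat. \<forall>a\<in>C. r \<ge> 0 \<longrightarrow> (\<lambda>x. r * a x) \<in> C)"

definition order_unit_space :: "('a \<Rightarrow> rat) set \<Rightarrow> ('a \<Rightarrow> rat) set \<Rightarrow> ('a \<Rightarrow> rat) \<Rightarrow> bool" where
  "order_unit_space V C u \<longleftrightarrow> convex_cone V C \<and> u \<in> C \<and>
     (\<lambda>x. - u x) \<notin> C \<and>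
     (\<forall>a\<in>V. \<exists>l::rat. (\<lambda>x. l * u x + a x) \<in> C)"

end

theory Submission
  imports Defs
begin

lemma sum_split_nat: "(\<Sum>i<m+k. f i) = (\<Sum>i<m. f i) + (\<Sum>i<k. f (m+i))"
  for f :: "nat \<Rightarrow> 'b::comm_monoid_add"
  by (induction k) (simp_all add: add.assoc)

lemma common_denom: fixes n :: nat and c :: "nat \<Rightarrow> rat" shows "\<exists>d::nat. d > 0 \<and> (\<forall>i<n. \<exists>z::int. c i * of_nat d = (of_int z :: rat))"
proof (induction n)
  case 0 show ?case by (intro exI[of _ 1]) simp
next
  case (Suc n)
  then obtain d :: nat where d: "d > 0" "\<forall>i<n. \<exists>z::int. c i * of_nat d = of_int z" by blast
  obtain p q where pq: "quotient_of (c n) = (p, q)" by (cases "quotient_of (c n)") auto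
  have q: "q > 0" using quotient_of_denom_pos[OF pq] .
  have cn: "c n = of_int p / of_int q" using quotient_of_div[OF pq] .
  define d' where "d' = d * nat q"
  have "d' > 0" using d q by (simp add: d'_def)
  moreover have "\<forall>i<Suc n. \<exists>z::int. c i * of_nat d' = of_int z"
  proof (intro allI impI)
    fix i assume i: "i < Suc n"
    have dq: "(of_nat d' :: rat) = of_nat d * of_int q" using q by (simp add: d'_def)
    show "\<exists>z::int. c i * of_nat d' = of_int z"
    proof (cases "i < n")
      case True
      then obtain z where "c i * of_nat d = of_int z" using d by blast
      hence "c i * of_nat d' = of_int (z * q)" by (simp add: dq mult.assoc[symmetric])
      thus ?thesis by blast
    next
      case False
      hence "i = n" using i by simp
      hence "c i * of_nat d' = of_int (p * int d)" using q by (simp add: dq cn)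
      thus ?thesis by blast
    qed
  qed
  ultimately show ?case by blast
qed

lemma cone_add:
  assumes "a \<in> plaus_cone \<Sigma> Pl" "b \<in> plaus_cone \<Sigma> Pl"
  shows "(\<lambda>x. a x + b x) \<in> plaus_cone \<Sigma> Pl"
proof -
  obtain n1 :: nat and c1 A1 B1 where h1: "\<forall>i<n1. c1 i \<ge> 0 \<and> A1 i \<in> events \<Sigma> \<and> B1 i \<in> events \<Sigma> \<and> Pl (B1 i) \<le> Pl (A1 i)"
    and a: "a = (\<lambda>x. \<Sum>i<n1. c1 i * (evec (A1 i) x - evec (B1 i) x))"
    using assms(1) unfolding plaus_cone_def mem_Collect_eq by blast
  obtain n2 :: nat and c2 A2 B2 where h2: "\<forall>i<n2. c2 i \<ge> 0 \<and> A2 i \<in> events \<Sigma> \<and> B2 i \<in> events \<Sigma> \<and> Pl (B2 i) \<le> Pl (A2 i)"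
    and b: "b = (\<lambda>x. \<Sum>i<n2. c2 i * (evec (A2 i) x - evec (B2 i) x))"
    using assms(2) unfolding plaus_cone_def mem_Collect_eq by blast
  define c where "c i = (if i < n1 then c1 i else c2 (i - n1))" for i
  define A where "A i = (if i < n1 then A1 i else A2 (i - n1))" for i
  define B where "B i = (if i < n1 then B1 i else B2 (i - n1))" for i
  have "\<forall>i<n1+n2. c i \<ge> 0 \<and> A i \<in> events \<Sigma> \<and> B i \<in> events \<Sigma> \<and> Pl (B i) \<le> Pl (A i)"
  proof (intro allI impI)
    fix i assume i: "i < n1 + n2"
    show "c i \<ge> 0 \<and> A i \<in> events \<Sigma> \<and> B i \<in> events \<Sigma> \<and> Pl (B i) \<le> Pl (A i)"
    proof (cases "i < n1")
      case True thus ?thesis using h1 by (simp add: c_def A_def B_def)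
    next
      case False
      hence "i - n1 < n2" using i by simp
      thus ?thesis using h2 False by (simp add: c_def A_def B_def)
    qed
  qed
  moreover have "(\<lambda>x. a x + b x) = (\<lambda>x. \<Sum>i<n1+n2. c i * (evec (A i) x - evec (B i) x))"
    unfolding a b by (simp add: sum_split_nat c_def A_def B_def)
  ultimately show ?thesis unfolding plaus_cone_def mem_Collect_eq by (intro exI[of _ "n1+n2"] exI[of _ c] exI[of _ A] exI[of _ B] conjI)
qed

lemma cone_scale:
  assumes "a \<in> plaus_cone \<Sigma> Pl" "r \<ge> 0"
  shows "(\<lambda>x. r * a x) \<in> plaus_cone \<Sigma> Pl"
proof -
  obtain n :: nat and c A B where h: "\<forall>i<n. c i \<ge> 0 \<and> A i \<in> events \<Sigma> \<and> B i \<in> events \<Sigma> \<and> Pl (B i) \<le> Pl (A i)"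
    and a: "a = (\<lambda>x. \<Sum>i<n. c i * (evec (A i) x - evec (B i) x))"
    using assms(1) unfolding plaus_cone_def mem_Collect_eq by blast
  have "\<forall>i<n. r * c i \<ge> 0 \<and> A i \<in> events \<Sigma> \<and> B i \<in> events \<Sigma> \<and> Pl (B i) \<le> Pl (A i)"
    using h assms(2) by simp
  moreover have "(\<lambda>x. r * a x) = (\<lambda>x. \<Sum>i<n. (\<lambda>i. r * c i) i * (evec (A i) x - evec (B i) x))"
    unfolding a by (simp add: sum_distrib_left mult.assoc)
  ultimately show ?thesis unfolding plaus_cone_def mem_Collect_eq by (intro exI[of _ n] exI[of _ "\<lambda>i. r * c i"] exI[of _ A] exI[of _ B] conjI)
qed

lemma cone_gen:
  assumes "A \<in> events \<Sigma>" "B \<in> events \<Sigma>" "Pl B \<le> Pl A"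
  shows "(\<lambda>x. evec A x - evec B x) \<in> plaus_cone \<Sigma> Pl"
proof -
  have "\<forall>i<(1::nat). (\<lambda>_. 1::rat) i \<ge> 0 \<and> (\<lambda>_. A) i \<in> events \<Sigma> \<and> (\<lambda>_. B) i \<in> events \<Sigma> \<and> Pl ((\<lambda>_. B) i) \<le> Pl ((\<lambda>_. A) i)"
    using assms by simp
  moreover have "(\<lambda>x. evec A x - evec B x) = (\<lambda>x. \<Sum>i<(1::nat). (\<lambda>_. 1::rat) i * (evec ((\<lambda>_. A) i) x - evec ((\<lambda>_. B) i) x))"
    by simp
  ultimately show ?thesis unfolding plaus_cone_def mem_Collect_eq by (intro exI[of _ "1::nat"] exI[of _ "\<lambda>_. 1::rat"] exI[of _ "\<lambda>_. A"] exI[of _ "\<lambda>_. B"] conjI)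
qed

lemma cone_zero: "(\<lambda>x. 0) \<in> plaus_cone \<Sigma> Pl"
  unfolding plaus_cone_def by (intro CollectI exI[of _ 0]) simp

lemma cone_sum:
  assumes "finite F" "\<And>x. x \<in> F \<Longrightarrow> f x \<in> plaus_cone \<Sigma> Pl"
  shows "(\<lambda>y. \<Sum>x\<in>F. f x y) \<in> plaus_cone \<Sigma> Pl"
  using assms
proof (induction F rule: finite_induct)
  case empty thus ?case using cone_zero by simp
next
  case (insert a F)
  hence "(\<lambda>y. f a y + (\<Sum>x\<in>F. f x y)) \<in> plaus_cone \<Sigma> Pl"
    by (intro cone_add[where a = "f a" and b = "\<lambda>y. \<Sum>x\<in>F. f x y", simplified]) auto
  thus ?case using insert by simp
qed


lemma part1:
  assumes arch: "archimedean X \<Sigma> Pl" and ev: "A0 \<in> events \<Sigma>" "B0 \<in> events \<Sigma>"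
    and lt: "Pl A0 < Pl B0"
  shows "(\<lambda>x. evec A0 x - evec B0 x) \<notin> plaus_cone \<Sigma> Pl"
proof
  assume "(\<lambda>x. evec A0 x - evec B0 x) \<in> plaus_cone \<Sigma> Pl"
  then obtain n :: nat and c A B where h: "\<forall>i<n. c i \<ge> 0 \<and> A i \<in> events \<Sigma> \<and> B i \<in> events \<Sigma> \<and> Pl (B i) \<le> Pl (A i)"
    and eq: "(\<lambda>x. evec A0 x - evec B0 x) = (\<lambda>x. \<Sum>i<n. c i * (evec (A i) x - evec (B i) x))"
    unfolding plaus_cone_def mem_Collect_eq by blast
  obtain d :: nat where d: "d > 0" "\<forall>i<n. \<exists>z::int. c i * of_nat d = of_int z"
    using common_denom by blast
  define k where "k i = nat \<lfloor>c i * of_nat d\<rfloor>" for i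
  have k: "of_nat (k i) = c i * of_nat d" if i: "i < n" for i
  proof -
    obtain z where z: "c i * of_nat d = of_int z" using d i by blast
    have "c i * of_nat d \<ge> 0" using h i by simp
    hence "z \<ge> 0" using z by simp
    thus ?thesis using z by (simp add: k_def)
  qed
  define ps where "ps = concat (map (\<lambda>i. replicate (k i) (B i, A i)) [0..<n]) @ replicate d (A0, B0)"
  define ind where "ind x S = (if x \<in> S then 1 else 0 :: nat)" for x :: 'a and S
  have cnt: "length (filter (\<lambda>p. x \<in> fst p) ps) = length (filter (\<lambda>p. x \<in> snd p) ps)" for x
  proof -
    have e: "(\<Sum>i<n. c i * (evec (A i) x - evec (B i) x)) = evec A0 x - evec B0 x"
      using fun_cong[OF eq, of x] by simp
    have "(\<Sum>i<n. of_nat (k i) * (evec (A i) x - evec (B i) x)) = (\<Sum>i<n. of_nat d * (c i * (evec (A i) x - evec (B i) x)))"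
      by (rule sum.cong) (simp_all add: k)
    also have "\<dots> = of_nat d * (evec A0 x - evec B0 x)" by (simp add: sum_distrib_left[symmetric] e)
    finally have e2: "(\<Sum>i<n. of_nat (k i) * (evec (A i) x - evec (B i) x)) = of_nat d * (evec A0 x - evec B0 x)" .
    have ev': "evec S x = of_nat (ind x S)" for S by (simp add: evec_def ind_def)
    have "(of_nat ((\<Sum>i<n. k i * ind x (B i)) + d * ind x A0) :: rat) = of_nat ((\<Sum>i<n. k i * ind x (A i)) + d * ind x B0)"
      using e2 unfolding ev' by (simp add: right_diff_distrib sum_subtractf algebra_simps)
    hence neq: "(\<Sum>i<n. k i * ind x (B i)) + d * ind x A0 = (\<Sum>i<n. k i * ind x (A i)) + d * ind x B0"
      by (simp only: of_nat_eq_iff)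
    have l1: "length (filter (\<lambda>p. x \<in> fst p) ps) = (\<Sum>i<n. k i * ind x (B i)) + d * ind x A0"
      by (simp add: ps_def filter_concat length_concat filter_replicate comp_def ind_def
            sum_set_upt_conv_sum_list_nat[symmetric] atLeast0LessThan) (intro sum.cong; simp)
    have l2: "length (filter (\<lambda>p. x \<in> snd p) ps) = (\<Sum>i<n. k i * ind x (A i)) + d * ind x B0"
      by (simp add: ps_def filter_concat length_concat filter_replicate comp_def ind_def
            sum_set_upt_conv_sum_list_nat[symmetric] atLeast0LessThan) (intro sum.cong; simp)
    show ?thesis using l1 l2 neq by simp
  qed
  have setps: "\<forall>p\<in>set ps. fst p \<in> events \<Sigma> \<and> snd p \<in> events \<Sigma> \<and> Pl (fst p) \<le> Pl (snd p)"
    using h ev lt by (auto simp: ps_def less_imp_le)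
  have ne: "ps \<noteq> []" using d by (simp add: ps_def)
  have lastp: "ps ! (length ps - 1) = (A0, B0)"
  proof -
    have "last ps = (A0, B0)" using d by (simp add: ps_def)
    thus ?thesis using last_conv_nth[OF ne] by simp
  qed
  have "Pl (snd (ps ! (length ps - 1))) \<le> Pl (fst (ps ! (length ps - 1)))"
  proof (rule arch[unfolded archimedean_def, rule_format])
    show "1 \<le> length ps" using ne by (cases ps) auto
  next
    fix i assume "i < length ps"
    hence "ps ! i \<in> set ps" by simp
    thus "fst (ps ! i) \<in> events \<Sigma> \<and> snd (ps ! i) \<in> events \<Sigma>" using setps by blast
  next
    fix x assume "x \<in> X"
    show "card {i. i < length ps \<and> x \<in> fst (ps ! i)} = card {i. i < length ps \<and> x \<in> snd (ps ! i)}"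
      using cnt[of x] by (simp add: length_filter_conv_card)
  next
    fix i assume "i < length ps - 1"
    hence "ps ! i \<in> set ps" by simp
    thus "Pl (fst (ps ! i)) \<le> Pl (snd (ps ! i))" using setps by blast
  qed
  thus False using lt lastp by simp
qed

theorem mainTheorem3:
  fixes X :: "'a set" and \<Sigma> :: "'a set set" and Pl :: "'a set \<Rightarrow> 'd::order"
  assumes "test_space X \<Sigma>" and "locally_finite \<Sigma>"
    and "plausibility_measure \<Sigma> Pl" and "archimedean X \<Sigma> Pl"
  shows "(\<forall>A\<in>events \<Sigma>. \<forall>B\<in>events \<Sigma>. Pl A < Pl B \<longrightarrow>
            (\<lambda>x. evec A x - evec B x) \<notin> plaus_cone \<Sigma> Pl)
       \<and> (\<forall>T\<in>\<Sigma>. order_unit_space (free_space X) (plaus_cone \<Sigma> Pl) (evec T))"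
proof -
  have ts: "\<Sigma> \<subseteq> Pow X" "\<Union>\<Sigma> = X" using assms(1) unfolding test_space_def by auto
  have lf: "\<And>T. T \<in> \<Sigma> \<Longrightarrow> finite T" using assms(2) unfolding locally_finite_def by auto
  have pm: "\<And>T R. T \<in> \<Sigma> \<Longrightarrow> R \<in> \<Sigma> \<Longrightarrow> Pl T = Pl R"
    "\<And>A B. A \<in> events \<Sigma> \<Longrightarrow> B \<in> events \<Sigma> \<Longrightarrow> A \<subseteq> B \<Longrightarrow> Pl A \<le> Pl B"
    "\<And>T. T \<in> \<Sigma> \<Longrightarrow> Pl {} < Pl T"
    using assms(3) unfolding plausibility_measure_def by blast+
  have evX: "A \<subseteq> X \<and> finite A" if "A \<in> events \<Sigma>" for A
    using that ts lf unfolding events_def by (auto intro: finite_subset)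
  have P1: "\<forall>A\<in>events \<Sigma>. \<forall>B\<in>events \<Sigma>. Pl A < Pl B \<longrightarrow>
            (\<lambda>x. evec A x - evec B x) \<notin> plaus_cone \<Sigma> Pl"
    using part1[OF assms(4)] by blast
  have sub: "plaus_cone \<Sigma> Pl \<subseteq> free_space X"
  proof
    fix v assume "v \<in> plaus_cone \<Sigma> Pl"
    then obtain n :: nat and c A B where h: "\<forall>i<n. c i \<ge> 0 \<and> A i \<in> events \<Sigma> \<and> B i \<in> events \<Sigma> \<and> Pl (B i) \<le> Pl (A i)"
      and v: "v = (\<lambda>x. \<Sum>i<n. c i * (evec (A i) x - evec (B i) x))"
      unfolding plaus_cone_def mem_Collect_eq by blast
    have s: "{x. v x \<noteq> 0} \<subseteq> (\<Union>i<n. A i \<union> B i)"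
    proof
      fix x assume "x \<in> {x. v x \<noteq> 0}"
      hence "(\<Sum>i<n. c i * (evec (A i) x - evec (B i) x)) \<noteq> 0" using v by simp
      then obtain i where "i < n" "c i * (evec (A i) x - evec (B i) x) \<noteq> 0"
        by (meson lessThan_iff sum.neutral)
      thus "x \<in> (\<Union>i<n. A i \<union> B i)" by (auto simp: evec_def split: if_splits)
    qed
    have hh: "\<And>i. i < n \<Longrightarrow> A i \<subseteq> X \<and> finite (A i) \<and> B i \<subseteq> X \<and> finite (B i)"
      using h evX by blast
    have "(\<Union>i<n. A i \<union> B i) \<subseteq> X \<and> finite (\<Union>i<n. A i \<union> B i)"
      using hh by auto
    thus "v \<in> free_space X" using s unfolding free_space_def by (auto intro: finite_subset)
  qed
  have conv: "convex_cone (free_space X) (plaus_cone \<Sigma> Pl)"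
    unfolding convex_cone_def
  proof (intro conjI sub ballI allI impI)
    fix a b assume "a \<in> plaus_cone \<Sigma> Pl" "b \<in> plaus_cone \<Sigma> Pl"
    thus "(\<lambda>x. a x + b x) \<in> plaus_cone \<Sigma> Pl" by (rule cone_add)
  next
    fix r :: rat and a assume "a \<in> plaus_cone \<Sigma> Pl" "0 \<le> r"
    thus "(\<lambda>x. r * a x) \<in> plaus_cone \<Sigma> Pl" by (rule cone_scale)
  qed
  show ?thesis
  proof (intro conjI P1 ballI)
    fix T assume T: "T \<in> \<Sigma>"
    have Tev: "T \<in> events \<Sigma>" using T unfolding events_def by blast
    have lt0: "Pl {} < Pl T" using pm(3) T .
    have ev0: "{} \<in> events \<Sigma>" using T unfolding events_def by blast
    have "(\<lambda>x. evec T x - evec {} x) \<in> plaus_cone \<Sigma> Pl"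
      using cone_gen[OF Tev ev0 less_imp_le[OF lt0]] by simp
    hence uC: "evec T \<in> plaus_cone \<Sigma> Pl" by (simp add: evec_def)
    have "(\<lambda>x. evec {} x - evec T x) \<notin> plaus_cone \<Sigma> Pl" using P1 ev0 Tev lt0 by blast
    hence nuC: "(\<lambda>x. - evec T x) \<notin> plaus_cone \<Sigma> Pl" by (simp add: evec_def)
    have single: "{x} \<in> events \<Sigma> \<and> Pl {x} \<le> Pl T" if xX: "x \<in> X" for x
    proof -
      obtain R where R: "R \<in> \<Sigma>" "x \<in> R" using xX ts by blast
      have Rev: "R \<in> events \<Sigma>" using R unfolding events_def by blast
      have xe: "{x} \<in> events \<Sigma>" using R unfolding events_def by blast
      have "Pl {x} \<le> Pl R" using pm(2)[OF xe Rev] R by simp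
      thus ?thesis using pm(1)[OF R(1) T] xe by simp
    qed
    have ou: "\<exists>l::rat. (\<lambda>x. l * evec T x + a x) \<in> plaus_cone \<Sigma> Pl" if a: "a \<in> free_space X" for a
    proof -
      define S where "S = {x. a x \<noteq> 0}"
      have S: "finite S" "S \<subseteq> X" using a unfolding free_space_def S_def by auto
      define f where "f x = (\<lambda>y. \<bar>a x\<bar> * evec T y + a x * evec {x} y)" for x
      have fC: "f x \<in> plaus_cone \<Sigma> Pl" if "x \<in> S" for x
      proof -
        have sx: "{x} \<in> events \<Sigma>" "Pl {x} \<le> Pl T" using single that S by auto
        show ?thesis
        proof (cases "a x \<ge> 0")
          case True
          have g1: "(\<lambda>y. evec T y - evec {} y) \<in> plaus_cone \<Sigma> Pl"
            using cone_gen[OF Tev ev0 less_imp_le[OF lt0]] by simp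
          have g2: "(\<lambda>y. evec {x} y - evec {} y) \<in> plaus_cone \<Sigma> Pl"
            using cone_gen[OF sx(1) ev0 pm(2)[OF ev0 sx(1) empty_subsetI]] by simp
          have "(\<lambda>y. a x * (evec T y - evec {} y) + a x * (evec {x} y - evec {} y)) \<in> plaus_cone \<Sigma> Pl"
            using cone_add[OF cone_scale[OF g1 True] cone_scale[OF g2 True]] by simp
          thus ?thesis using True by (simp add: f_def evec_def)
        next
          case False
          have g: "(\<lambda>y. evec T y - evec {x} y) \<in> plaus_cone \<Sigma> Pl"
            using cone_gen[OF Tev sx(1) sx(2)] by simp
          have "(\<lambda>y. (- a x) * (evec T y - evec {x} y)) \<in> plaus_cone \<Sigma> Pl"
            using cone_scale[OF g, of "- a x"] False by simp
          thus ?thesis using False by (simp add: f_def algebra_simps)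
        qed
      qed
      have "(\<lambda>y. \<Sum>x\<in>S. f x y) \<in> plaus_cone \<Sigma> Pl" by (rule cone_sum[OF S(1) fC])
      moreover have "(\<lambda>y. \<Sum>x\<in>S. f x y) = (\<lambda>y. (\<Sum>x\<in>S. \<bar>a x\<bar>) * evec T y + a y)"
      proof
        fix y
        have "(\<Sum>x\<in>S. a x * evec {x} y) = a y"
        proof -
          have "(\<Sum>x\<in>S. a x * evec {x} y) = (\<Sum>x\<in>S. if x = y then a y else 0)"
            by (rule sum.cong) (auto simp: evec_def)
          also have "\<dots> = a y" using S(1) by (simp add: S_def)
          finally show ?thesis .
        qed
        thus "(\<Sum>x\<in>S. f x y) = (\<Sum>x\<in>S. \<bar>a x\<bar>) * evec T y + a y"
          by (simp add: f_def sum.distrib sum_distrib_right)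
      qed
      ultimately show ?thesis by (intro exI[of _ "\<Sum>x\<in>S. \<bar>a x\<bar>"]) simp
    qed
    show "order_unit_space (free_space X) (plaus_cone \<Sigma> Pl) (evec T)"
      unfolding order_unit_space_def using conv uC nuC ou by blast
  qed
qed

end
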